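(* Let $\mu_1,\mu_2$ be finite Borel measures on $M$ with $\mu_1\geqslant\mu_2$, i.e. $\mu_1=\mu_2+m$ for some non-negative Borel measure $m$. Let $\mathcal A$ be a finite measurable partition and $\mathcal B$ a measurable partition. Then $$H_{\mu_1}(\mathcal A\mid\mathcal B)\geqslant H_{\mu_2}(\mathcal A\mid\mathcal B).$$
   Context: For a probability measure $\mu$, $H_\mu(\mathcal A\mid\mathcal B)=\int H_{\mu_{x,\mathcal B}}(\mathcal A)\,\mathrm d\mu(x)$ with $\{\mu_{x,\mathcal B}\}$ the conditional measures of $\mu$ on atoms of $\mathcal B$ and $H_\nu(\mathcal A)=-\sum_{A\in\mathcal A}\nu(A)\log\nu(A)$. For a finite nonzero Borel measure $\mu$, $H_\mu(\mathcal A\mid\mathcal B):=\mu(M)\cdot H_{\bar\mu}(\mathcal A\mid\mathcal B)$ with $\bar\mu=\mu/\mu(M)$ (and $0$ for the zero measure). *)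

theory Defs
  imports "HOL-Probability.Probability"
begin

definition meas_partition :: "'a::topological_space set set \<Rightarrow> bool" where
  "meas_partition P \<longleftrightarrow> P \<subseteq> sets borel \<and> {} \<notin> P \<and> \<Union>P = UNIV \<and>
     (\<forall>p\<in>P. \<forall>q\<in>P. p \<noteq> q \<longrightarrow> p \<inter> q = {})"

definition atom_algebra :: "'a::topological_space set set \<Rightarrow> 'a measure" where
  "atom_algebra B = sigma UNIV {S \<in> sets borel. \<forall>b\<in>B. b \<subseteq> S \<or> b \<inter> S = {}}"

text \<open>Conditional measure of the set A on the atom of B containing x,
w.r.t. the measure mu (defined mu-a.e. as conditional expectation of the indicator).\<close>
definition cond_meas :: "'a::topological_space measure \<Rightarrow> 'a set set \<Rightarrow> 'a \<Rightarrow> 'a set \<Rightarrow> real" where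
  "cond_meas mu B x A = real_cond_exp mu (atom_algebra B) (indicator A) x"

definition cond_entropy_prob :: "'a::topological_space measure \<Rightarrow> 'a set set \<Rightarrow> 'a set set \<Rightarrow> real" where
  "cond_entropy_prob mu A B =
     (\<integral>x. (\<Sum>a\<in>A. - (cond_meas mu B x a * ln (cond_meas mu B x a))) \<partial>mu)"

definition cond_entropy :: "'a::topological_space measure \<Rightarrow> 'a set set \<Rightarrow> 'a set set \<Rightarrow> real" where
  "cond_entropy mu A B =
     (if measure mu (space mu) = 0 then 0
      else measure mu (space mu) *
        cond_entropy_prob (scale_measure (ennreal (1 / measure mu (space mu))) mu) A B)"

end

theory Submission
  imports Defs "HOL-Real_Asymp.Real_Asymp"
begin


lemma scale_eq_density:
  assumes "r \<ge> 0"
  shows "scale_measure (ennreal r) M = density M (\<lambda>_. ennreal r)"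
  by (rule measure_eqI) (auto simp: emeasure_density nn_integral_cmult_indicator)

lemma integral_scale:
  fixes f :: "'a \<Rightarrow> real"
  assumes "r \<ge> 0" "f \<in> borel_measurable M"
  shows "integral\<^sup>L (scale_measure (ennreal r) M) f = r * integral\<^sup>L M f"
  using assms by (simp add: scale_eq_density integral_density)

lemma null_sets_scale:
  assumes "r > 0"
  shows "null_sets (scale_measure (ennreal r) M) = null_sets M"
  using assms by (auto simp: null_sets_def) 

lemma AE_scale:
  assumes "r > 0"
  shows "(AE x in scale_measure (ennreal r) M. Q x) = (AE x in M. Q x)"
  using assms by (simp add: eventually_ae_filter null_sets_scale space_scale_measure)

lemma atom_algebra_space: "space (atom_algebra B) = UNIV"
  by (simp add: atom_algebra_def)

lemma atom_algebra_sets: "sets (atom_algebra B) \<subseteq> sets borel"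
proof -
  have "sets (atom_algebra B) = sigma_sets UNIV {S \<in> sets borel. \<forall>b\<in>B. b \<subseteq> S \<or> b \<inter> S = {}}"
    unfolding atom_algebra_def by (rule sets_measure_of) simp
  also have "\<dots> \<subseteq> sets borel"
    by (rule sets.sigma_sets_subset') auto
  finally show ?thesis .
qed

lemma integral_le_measure:
  fixes K :: "'a \<Rightarrow> real"
  assumes "sets M = sets N" "\<And>X. X \<in> sets M \<Longrightarrow> emeasure M X \<le> emeasure N X"
    "finite_measure N" "K \<in> borel_measurable N" "AE x in N. 0 \<le> K x" "\<And>x. \<bar>K x\<bar> \<le> C"
  shows "integral\<^sup>L M K \<le> integral\<^sup>L N K"
proof -
  have sp: "space M = space N" using assms(1) by (rule sets_eq_imp_space_eq)
  have "emeasure M \<le> emeasure N"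
  proof (rule le_funI)
    fix X show "emeasure M X \<le> emeasure N X"
    proof (cases "X \<in> sets M")
      case True then show ?thesis by (rule assms(2))
    next
      case False then have "emeasure M X = 0" by (rule emeasure_notin_sets)
      then show ?thesis by simp
    qed
  qed
  then have le: "M \<le> N" unfolding le_measure_iff using sp assms(1) by simp
  have "AE x in M. 0 \<le> K x"
  proof -
    from assms(5) obtain Nn where Nn: "Nn \<in> null_sets N" "{x\<in>space N. \<not> 0 \<le> K x} \<subseteq> Nn"
      by (auto simp: eventually_ae_filter)
    have Nm: "Nn \<in> sets M" using Nn(1) assms(1) by (simp add: null_sets_def)
    have "emeasure M Nn \<le> emeasure N Nn" using Nm by (rule assms(2))
    then have "emeasure M Nn = 0" using Nn(1) by (simp add: null_sets_def)
    then have "Nn \<in> null_sets M" using Nm by (simp add: null_sets_def)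
    then show ?thesis using Nn(2) sp by (intro AE_I') auto
  qed
  have KM: "K \<in> borel_measurable M"
    by (subst measurable_cong_sets[OF assms(1) refl]) (rule assms(4))
  have iN: "integrable N K"
    using finite_measure.integrable_const_bound[OF assms(3) _ assms(4), of C] assms(6) by simp
  have fin: "(\<integral>\<^sup>+ x. ennreal (K x) \<partial>N) < \<infinity>"
  proof -
    have "(\<integral>\<^sup>+ x. ennreal (K x) \<partial>N) \<le> (\<integral>\<^sup>+ x. ennreal (norm (K x)) \<partial>N)"
      by (intro nn_integral_mono ennreal_leI) simp
    then show ?thesis using integrableD(2)[OF iN] by (simp add: less_top[symmetric])
  qed
  have "integral\<^sup>L M K = enn2real (\<integral>\<^sup>+ x. ennreal (K x) \<partial>M)"
    by (rule integral_eq_nn_integral[OF KM \<open>AE x in M. 0 \<le> K x\<close>])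
  also have "\<dots> \<le> enn2real (\<integral>\<^sup>+ x. ennreal (K x) \<partial>N)"
    by (rule enn2real_mono[OF nn_integral_mono_measure[OF assms(1) le]]) (use fin in simp)
  also have "\<dots> = integral\<^sup>L N K"
    by (rule integral_eq_nn_integral[OF assms(4,5), symmetric])
  finally show ?thesis .
qed

lemma pw0: "0 \<le> (t::real) \<Longrightarrow> t \<le> 1 \<Longrightarrow> 0 \<le> - (t * ln t) \<and> - (t * ln t) \<le> 1"
proof -
  assume t: "0 \<le> t" "t \<le> 1"
  show ?thesis
  proof (cases "t = 0")
    case False
    then have tp: "0 < t" using t by simp
    have l0: "ln t \<le> 0" using tp t(2) by simp
    have "ln (1/t) \<le> 1/t - 1" using tp by (intro ln_le_minus_one) simp
    then have "- ln t \<le> 1/t - 1" using tp by (simp add: ln_div)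
    then have "t * (- ln t) \<le> t * (1/t - 1)" using tp by (intro mult_left_mono) auto
    also have "\<dots> = 1 - t" using tp by (simp add: right_diff_distrib)
    finally have u: "- (t * ln t) \<le> 1 - t" by simp
    have "t * ln t \<le> 0" using tp l0 by (intro mult_nonneg_nonpos) auto
    then show ?thesis using u t by linarith
  qed simp
qed

lemma pw1: "0 \<le> (t::real) \<Longrightarrow> 0 < s \<Longrightarrow> - (t * ln t) \<le> (- ln s - 1) * t + s"
proof -
  assume t: "0 \<le> t" and s: "0 < s"
  show ?thesis
  proof (cases "t = 0")
    case False
    then have tp: "t > 0" using t by simp
    have "ln (s/t) \<le> s/t - 1" using tp s by (intro ln_le_minus_one) simp
    then have "ln s - ln t \<le> s/t - 1" using tp s by (simp add: ln_div)
    then have "t * (ln s - ln t) \<le> t * (s/t - 1)" using tp by (intro mult_left_mono) auto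
    then show ?thesis using tp by (simp add: algebra_simps)
  qed (use s in simp)
qed

lemma pw2:
  assumes "0 \<le> (t::real)" "t \<le> 1" "0 < e" "e \<le> 1"
  shows "(- ln (max e (min 1 t)) - 1) * t + max e (min 1 t) \<le> - (t * ln t) + (e - e * ln e)"
proof (cases "e \<le> t")
  case True
  then have "max e (min 1 t) = t" using assms by simp
  moreover have "0 \<le> e - e * ln e" using assms by (smt (verit) ln_le_zero_iff mult_nonneg_nonpos)
  ultimately show ?thesis by (simp add: algebra_simps)
next
  case False
  then have m: "max e (min 1 t) = e" using assms by simp
  have l: "ln e \<le> 0" using assms by simp
  have "- ln e * t \<le> - ln e * e" using False l by (intro mult_left_mono) auto
  moreover have "0 \<le> - (t * ln t)" using pw0 assms by blast
  ultimately show ?thesis unfolding m using assms by (simp add: algebra_simps)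
qed

lemma sum_partition_point:
  assumes "meas_partition A" "x \<in> a0" "a0 \<in> A" "finite A"
  shows "(\<Sum>a\<in>A. f a * indicator a x) = (f a0 :: real)"
proof -
  have z: "f a * indicator a x = 0" if "a \<in> A - {a0}" for a
  proof -
    have "a \<inter> a0 = {}" using assms(1,3) that unfolding meas_partition_def by blast
    then have "x \<notin> a" using assms(2) by blast
    then show ?thesis by simp
  qed
  have "(\<Sum>a\<in>A. f a * indicator a x) = f a0 * indicator a0 x + (\<Sum>a\<in>A-{a0}. f a * indicator a x)"
    by (rule sum.remove[OF assms(4,3)])
  also have "(\<Sum>a\<in>A-{a0}. f a * indicator a x) = 0"
    by (rule sum.neutral) (use z in blast)
  finally show ?thesis using assms(2) by simp
qed



locale ent =
  fixes mu :: "'a::topological_space measure" and B :: "'a set set"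
  assumes sm: "sets mu = sets borel" and fm: "finite_measure mu"
    and cp: "measure mu (space mu) > 0"
begin

definition "c = measure mu (space mu)"
definition "P = scale_measure (ennreal (1/c)) mu"
definition "E a = real_cond_exp P (atom_algebra B) (indicator a)"

lemma c_pos: "c > 0" using cp by (simp add: c_def)
lemma sp_mu: "space mu = UNIV" using sets_eq_imp_space_eq[OF sm] by simp
lemma sP: "sets P = sets borel" by (simp add: P_def sm)
lemma spP: "space P = UNIV" by (simp add: P_def space_scale_measure sp_mu)

lemma probP: "prob_space P"
proof
  have "emeasure mu (space mu) = ennreal c"
    using finite_measure.emeasure_eq_measure[OF fm] by (simp add: c_def)
  then show "emeasure P (space P) = 1"
    using c_pos by (simp add: P_def space_scale_measure ennreal_mult[symmetric])
qed

lemma subalg: "subalgebra P (atom_algebra B)"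
  unfolding subalgebra_def using atom_algebra_sets[of B] by (simp add: atom_algebra_space spP sP)

lemma sfs: "sigma_finite_subalgebra P (atom_algebra B)"
proof (rule finite_measure_subalgebra_is_sigma_finite)
  show "finite_measure_subalgebra P (atom_algebra B)"
    unfolding finite_measure_subalgebra_def finite_measure_subalgebra_axioms_def
    using probP subalg by (simp add: prob_space.finite_measure)
qed

lemma fmP: "finite_measure P" using probP by (simp add: prob_space.finite_measure)

lemma E_measF[measurable]: "E a \<in> borel_measurable (atom_algebra B)"
  unfolding E_def by simp

lemma meas_P: "measurable P N = measurable borel N"
  by (rule measurable_cong_sets[OF sP refl])

lemma E_meas[measurable]: "E a \<in> borel_measurable borel"
  unfolding E_def using borel_measurable_cond_exp2[of P "atom_algebra B" "indicator a"]
  by (simp add: meas_P)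

lemma meas_F_borel: "f \<in> borel_measurable (atom_algebra B) \<Longrightarrow> f \<in> borel_measurable borel"
  using measurable_from_subalg[OF subalg] by (simp add: meas_P)

lemma AE_P_mu: "(AE x in P. Q x) \<Longrightarrow> (AE x in mu. Q x)"
proof -
  assume "AE x in P. Q x"
  then have "AE x in scale_measure (ennreal (1/c)) mu. Q x" by (simp only: P_def)
  moreover have "0 < 1/c" using c_pos by simp
  ultimately show ?thesis using AE_scale[where r="1/c" and M=mu and Q=Q] by simp
qed

lemma int_P: "f \<in> borel_measurable borel \<Longrightarrow> integral\<^sup>L P f = (1/c) * integral\<^sup>L mu f"
  unfolding P_def using c_pos by (intro integral_scale) (auto simp: measurable_def sm)

lemma integrable_bdd:
  fixes f :: "'a \<Rightarrow> real"
  shows "f \<in> borel_measurable borel \<Longrightarrow> (\<And>x. \<bar>f x\<bar> \<le> K) \<Longrightarrow> integrable P f"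
  using finite_measure.integrable_const_bound[OF fmP, of f K]
  by (auto simp: measurable_def sP spP)

lemma E_bounds:
  assumes "a \<in> sets borel"
  shows "AE x in mu. 0 \<le> E a x \<and> E a x \<le> 1"
proof -
  interpret sigma_finite_subalgebra P "atom_algebra B" by (rule sfs)
  have [measurable]: "a \<in> sets P" using assms sP by simp
  have i: "integrable P (indicator a :: 'a \<Rightarrow> real)"
    by (rule integrable_bdd[where K=1]) (use assms in auto)
  have "AE x in P. 0 \<le> E a x" unfolding E_def by (rule real_cond_exp_pos) auto
  moreover have "AE x in P. E a x \<le> 1" unfolding E_def
    by (rule real_cond_exp_le_c[OF i]) auto
  ultimately show ?thesis by (intro AE_P_mu) auto
qed

lemma E_intg:
  fixes g h :: "'a \<Rightarrow> real"
  assumes "a \<in> sets borel" and [measurable]: "g \<in> borel_measurable (atom_algebra B)"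
    "h \<in> borel_measurable borel" and "\<And>x. \<bar>g x\<bar> \<le> K" "\<And>x. \<bar>h x\<bar> \<le> K"
  shows "(\<integral>x. g x * E a x + h x \<partial>mu) = (\<integral>x. g x * indicator a x + h x \<partial>mu)"
proof -
  interpret sigma_finite_subalgebra P "atom_algebra B" by (rule sfs)
  have [measurable]: "a \<in> sets P" "a \<in> sets borel" using assms sP by auto
  have gb[measurable]: "g \<in> borel_measurable borel" by (rule meas_F_borel) simp
  have K0: "0 \<le> K" using assms(4)[of undefined] by simp
  have i1: "integrable P (\<lambda>x. g x * indicator a x)"
    by (rule integrable_bdd[where K=K]) (use K0 in \<open>auto simp: indicator_def assms(4)\<close>)
  have ih: "integrable P h" by (rule integrable_bdd[where K=K]) (auto simp: assms(5))
  have gm: "g \<in> borel_measurable P" using gb by (simp add: measurable_def sP spP)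
  have im: "indicator a \<in> borel_measurable P" by simp
  have e1: "integrable P (\<lambda>x. g x * E a x)" "(\<integral>x. g x * E a x \<partial>P) = (\<integral>x. g x * indicator a x \<partial>P)"
    unfolding E_def using real_cond_exp_intg[OF i1 assms(2) im] by auto
  have "(\<integral>x. g x * E a x + h x \<partial>P) = (\<integral>x. g x * indicator a x + h x \<partial>P)"
    using e1 i1 ih by (simp add: integral_add)
  then show ?thesis using c_pos by (simp add: int_P)
qed

lemma E_sum:
  assumes "meas_partition A" "finite A"
  shows "AE x in mu. (\<Sum>a\<in>A. E a x) = 1"
proof -
  interpret sigma_finite_subalgebra P "atom_algebra B" by (rule sfs)
  define f where "f i = (if i \<in> A then indicator i else (\<lambda>_. 0::real))" for i :: "'a set"
  have Ab: "A \<subseteq> sets borel" using assms(1) by (simp add: meas_partition_def)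
  have fi: "integrable P (f i)" for i
    unfolding f_def using Ab by (auto intro!: integrable_bdd[where K=1] simp: indicator_def)
  have s1: "(\<Sum>i\<in>A. f i x) = 1" for x
  proof -
    obtain a0 where "x \<in> a0" "a0 \<in> A" using assms(1) unfolding meas_partition_def by blast
    then have "(\<Sum>i\<in>A. 1 * indicator i x) = (1::real)" by (intro sum_partition_point assms)
    then show ?thesis unfolding f_def by simp
  qed
  have "AE x in P. real_cond_exp P (atom_algebra B) (\<lambda>x. \<Sum>i\<in>A. f i x) x = (\<Sum>i\<in>A. real_cond_exp P (atom_algebra B) (f i) x)"
    by (rule real_cond_exp_sum[OF fi])
  moreover have "AE x in P. real_cond_exp P (atom_algebra B) (\<lambda>x. 1) x = 1"
    by (rule real_cond_exp_F_meas) (auto intro: integrable_bdd[where K=1])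
  ultimately have "AE x in P. (\<Sum>i\<in>A. real_cond_exp P (atom_algebra B) (f i) x) = 1"
    unfolding s1 by eventually_elim simp
  moreover have "(\<Sum>i\<in>A. real_cond_exp P (atom_algebra B) (f i) x) = (\<Sum>a\<in>A. E a x)" for x
    unfolding E_def f_def by (intro sum.cong) auto
  ultimately show ?thesis by (intro AE_P_mu) simp
qed

lemma ent_eq:
  assumes "meas_partition A"
  shows "cond_entropy mu A B = (\<integral>x. (\<Sum>a\<in>A. - (E a x * ln (E a x))) \<partial>mu)"
proof -
  have "cond_entropy mu A B = c * cond_entropy_prob P A B"
    using c_pos unfolding cond_entropy_def by (simp add: c_def P_def)
  also have "cond_entropy_prob P A B = (\<integral>x. (\<Sum>a\<in>A. - (E a x * ln (E a x))) \<partial>P)"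
    unfolding cond_entropy_prob_def cond_meas_def E_def by simp
  also have "\<dots> = (1/c) * (\<integral>x. (\<Sum>a\<in>A. - (E a x * ln (E a x))) \<partial>mu)"
    by (rule int_P) measurable
  finally show ?thesis using c_pos by simp
qed

end



lemma sum_abs_bound:
  fixes f :: "'b \<Rightarrow> real"
  shows "(\<And>a. a \<in> A \<Longrightarrow> \<bar>f a\<bar> \<le> K) \<Longrightarrow> \<bar>\<Sum>a\<in>A. f a\<bar> \<le> real (card A) * K"
  by (rule order_trans[OF sum_abs]) (rule sum_bounded_above, auto)

lemma pw0a: "0 \<le> (t::real) \<Longrightarrow> t \<le> 1 \<Longrightarrow> \<bar>t * ln t\<bar> \<le> 1"
  using pw0[of t] by linarith

context ent begin

lemma meas_mu: "measurable mu N = measurable borel N"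
  by (rule measurable_cong_sets[OF sm refl])

lemma integrable_mu:
  fixes f :: "'a \<Rightarrow> real"
  assumes "f \<in> borel_measurable borel" "AE x in mu. \<bar>f x\<bar> \<le> K"
  shows "integrable mu f"
  by (rule finite_measure.integrable_const_bound[OF fm, where B=K])
     (use assms in \<open>simp_all add: meas_mu\<close>)

lemma E_bounds_all:
  "meas_partition A \<Longrightarrow> finite A \<Longrightarrow> AE x in mu. \<forall>a\<in>A. 0 \<le> E a x \<and> E a x \<le> 1"
  by (intro AE_finite_allI E_bounds) (auto simp: meas_partition_def)

lemma H_nonneg:
  assumes "meas_partition A" "finite A"
  shows "0 \<le> cond_entropy mu A B"
  unfolding ent_eq[OF assms(1)]
proof (rule integral_nonneg_AE)
  show "AE x in mu. 0 \<le> (\<Sum>a\<in>A. - (E a x * ln (E a x)))"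
    using E_bounds_all[OF assms] by eventually_elim (auto intro!: sum_nonneg dest: pw0)
qed

end


lemma main_ineq:
  assumes e1: "ent mu1" and e2: "ent mu2"
    and le: "\<And>X. X \<in> sets borel \<Longrightarrow> emeasure mu2 X \<le> emeasure mu1 X"
    and A: "meas_partition A" "finite A" and ep: "0 < \<epsilon>" "\<epsilon> \<le> 1"
  shows "cond_entropy mu2 A B \<le> cond_entropy mu1 A B
           + real (card A) * measure mu1 (space mu1) * (\<epsilon> - \<epsilon> * ln \<epsilon>)"
proof -
  interpret e1: ent mu1 B by (rule e1)
  interpret e2: ent mu2 B by (rule e2)
  define s where "s a x = max \<epsilon> (min 1 (e1.E a x))" for a x
  define g where "g a x = - ln (s a x) - 1" for a x
  define K where "K = 1 - ln \<epsilon>"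
  define \<delta> where "\<delta> = \<epsilon> - \<epsilon> * ln \<epsilon>"
  have Ab: "a \<in> sets borel" if "a \<in> A" for a using A(1) that by (auto simp: meas_partition_def)
  have smF[measurable]: "s a \<in> borel_measurable (atom_algebra B)" for a
    unfolding s_def by measurable
  have gmF[measurable]: "g a \<in> borel_measurable (atom_algebra B)" for a
    unfolding g_def by measurable
  have smb[measurable]: "s a \<in> borel_measurable borel" for a by (rule e1.meas_F_borel) simp
  have gmb[measurable]: "g a \<in> borel_measurable borel" for a by (rule e1.meas_F_borel) simp
  have sb: "\<epsilon> \<le> s a x" "s a x \<le> 1" for a x unfolding s_def using ep by auto
  have lnb: "ln \<epsilon> \<le> ln (s a x)" "ln (s a x) \<le> 0" for a x
    using sb[of a x] ep by auto
  have K1: "1 \<le> K" unfolding K_def using ep by simp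
  have gK: "\<bar>g a x\<bar> \<le> K" for a x unfolding g_def K_def using lnb[of a x] ep by auto
  have sK: "\<bar>s a x\<bar> \<le> K" for a x using sb[of a x] ep K1 by auto
  have gE_bd: "AE x in mu. \<forall>a\<in>A. \<bar>g a x * E a x + s a x\<bar> \<le> 2 * K"
    if "ent mu" "sets mu = sets borel" "E = ent.E mu B" for mu :: "'a measure" and E
  proof -
    interpret e: ent mu B by (rule that)
    show ?thesis using e.E_bounds_all[OF A] unfolding that(3)
    proof eventually_elim
      case (elim x)
      show ?case
      proof
        fix a assume "a \<in> A"
        then have "\<bar>e.E a x\<bar> \<le> 1" using elim by auto
        then have "\<bar>g a x * e.E a x\<bar> \<le> K * 1"
          unfolding abs_mult using gK[of a x] K1 by (intro mult_mono) auto
        then show "\<bar>g a x * e.E a x + s a x\<bar> \<le> 2 * K" using sK[of a x] by linarith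
      qed
    qed
  qed
  have gI_bd: "\<bar>g a x * indicator a x + s a x\<bar> \<le> 2 * K" for a x
    using gK[of a x] sK[of a x] by (auto simp: indicator_def)
  have int_gE: "integrable mu (\<lambda>x. g a x * ent.E mu B a x + s a x)"
    if "ent mu" "a \<in> A" for mu :: "'a measure" and a
  proof -
    interpret e: ent mu B by (rule that)
    show ?thesis
      by (rule e.integrable_mu[where K="2*K"])
         (use gE_bd[OF that(1) e.sm refl] that(2) in \<open>auto\<close>)
  qed
  have int_gI: "integrable mu (\<lambda>x. g a x * indicator a x + s a x)"
    if "ent mu" "a \<in> A" for mu :: "'a measure" and a
  proof -
    interpret e: ent mu B by (rule that)
    show ?thesis
      by (rule e.integrable_mu[where K="2*K"]) (use gI_bd Ab[OF that(2)] in auto)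
  qed
  have eq_gE: "(\<integral>x. g a x * ent.E mu B a x + s a x \<partial>mu) = (\<integral>x. g a x * indicator a x + s a x \<partial>mu)"
    if "ent mu" "a \<in> A" for mu :: "'a measure" and a
  proof -
    interpret e: ent mu B by (rule that)
    show ?thesis by (rule e.E_intg[where K=K]) (use Ab[OF that(2)] gK sK in auto)
  qed
  have "cond_entropy mu2 A B = (\<integral>x. (\<Sum>a\<in>A. - (e2.E a x * ln (e2.E a x))) \<partial>mu2)"
    by (rule e2.ent_eq[OF A(1)])
  also have "\<dots> \<le> (\<integral>x. (\<Sum>a\<in>A. g a x * e2.E a x + s a x) \<partial>mu2)"
  proof (rule integral_mono_AE)
    show "integrable mu2 (\<lambda>x. \<Sum>a\<in>A. - (e2.E a x * ln (e2.E a x)))"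
    proof (rule e2.integrable_mu[where K="real (card A) * 1"])
      show "AE x in mu2. \<bar>\<Sum>a\<in>A. - (e2.E a x * ln (e2.E a x))\<bar> \<le> real (card A) * 1"
        using e2.E_bounds_all[OF A] by eventually_elim (rule sum_abs_bound, auto intro!: pw0a)
    qed measurable
    show "integrable mu2 (\<lambda>x. \<Sum>a\<in>A. g a x * e2.E a x + s a x)"
      by (rule Bochner_Integration.integrable_sum, rule int_gE[OF e2], assumption)
    show "AE x in mu2. (\<Sum>a\<in>A. - (e2.E a x * ln (e2.E a x))) \<le> (\<Sum>a\<in>A. g a x * e2.E a x + s a x)"
      using e2.E_bounds_all[OF A]
    proof eventually_elim
      case (elim x)
      show ?case
      proof (rule sum_mono)
        fix a assume "a \<in> A"
        then show "- (e2.E a x * ln (e2.E a x)) \<le> g a x * e2.E a x + s a x"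
          unfolding g_def using elim pw1[of "e2.E a x" "s a x"] sb[of a x] ep by auto
      qed
    qed
  qed
  also have "\<dots> = (\<Sum>a\<in>A. (\<integral>x. g a x * e2.E a x + s a x \<partial>mu2))"
    by (rule Bochner_Integration.integral_sum) (rule int_gE[OF e2])
  also have "\<dots> = (\<Sum>a\<in>A. (\<integral>x. g a x * indicator a x + s a x \<partial>mu2))"
    by (rule sum.cong[OF refl]) (rule eq_gE[OF e2])
  also have "\<dots> = (\<integral>x. (\<Sum>a\<in>A. g a x * indicator a x + s a x) \<partial>mu2)"
    by (rule Bochner_Integration.integral_sum[symmetric]) (rule int_gI[OF e2])
  also have "\<dots> \<le> (\<integral>x. (\<Sum>a\<in>A. g a x * indicator a x + s a x) \<partial>mu1)"
  proof (rule integral_le_measure[where C="real (card A) * (2 * K)"])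
    show "sets mu2 = sets mu1" using e1.sm e2.sm by simp
    show "emeasure mu2 X \<le> emeasure mu1 X" if "X \<in> sets mu2" for X using that le e2.sm by simp
    show "finite_measure mu1" by (rule e1.fm)
    show "(\<lambda>x. \<Sum>a\<in>A. g a x * indicator a x + s a x) \<in> borel_measurable mu1"
      unfolding e1.meas_mu using Ab by measurable
    show "\<bar>\<Sum>a\<in>A. g a x * indicator a x + s a x\<bar> \<le> real (card A) * (2 * K)" for x
      by (rule sum_abs_bound) (rule gI_bd)
    show "AE x in mu1. 0 \<le> (\<Sum>a\<in>A. g a x * indicator a x + s a x)"
      using e1.E_bounds_all[OF A] e1.E_sum[OF A]
    proof eventually_elim
      case (elim x)
      obtain a0 where a0: "x \<in> a0" "a0 \<in> A" using A(1) unfolding meas_partition_def by blast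
      have "(\<Sum>a\<in>A. g a x * indicator a x + s a x) = (\<Sum>a\<in>A. g a x * indicator a x) + (\<Sum>a\<in>A. s a x)"
        by (rule sum.distrib)
      also have "(\<Sum>a\<in>A. g a x * indicator a x) = g a0 x"
        by (rule sum_partition_point[OF A(1) a0 A(2)])
      also have "1 \<le> (\<Sum>a\<in>A. s a x)"
      proof -
        have "(\<Sum>a\<in>A. e1.E a x) \<le> (\<Sum>a\<in>A. s a x)"
          by (rule sum_mono) (use elim in \<open>auto simp: s_def\<close>)
        then show ?thesis using elim by simp
      qed
      moreover have "-1 \<le> g a0 x" unfolding g_def using lnb[of a0 x] by simp
      ultimately show ?case by simp
    qed
  qed
  also have "\<dots> = (\<Sum>a\<in>A. (\<integral>x. g a x * indicator a x + s a x \<partial>mu1))"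
    by (rule Bochner_Integration.integral_sum) (rule int_gI[OF e1])
  also have "\<dots> = (\<Sum>a\<in>A. (\<integral>x. g a x * e1.E a x + s a x \<partial>mu1))"
    by (rule sum.cong[OF refl]) (rule eq_gE[OF e1, symmetric])
  also have "\<dots> = (\<integral>x. (\<Sum>a\<in>A. g a x * e1.E a x + s a x) \<partial>mu1)"
    by (rule Bochner_Integration.integral_sum[symmetric]) (rule int_gE[OF e1])
  also have "\<dots> \<le> (\<integral>x. (\<Sum>a\<in>A. - (e1.E a x * ln (e1.E a x))) + real (card A) * \<delta> \<partial>mu1)"
  proof (rule integral_mono_AE)
    show "integrable mu1 (\<lambda>x. \<Sum>a\<in>A. g a x * e1.E a x + s a x)"
      by (rule Bochner_Integration.integrable_sum, rule int_gE[OF e1], assumption)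
    show "integrable mu1 (\<lambda>x. (\<Sum>a\<in>A. - (e1.E a x * ln (e1.E a x))) + real (card A) * \<delta>)"
    proof (rule e1.integrable_mu[where K="real (card A) * 1 + \<bar>real (card A) * \<delta>\<bar>"])
      show "AE x in mu1. \<bar>(\<Sum>a\<in>A. - (e1.E a x * ln (e1.E a x))) + real (card A) * \<delta>\<bar>
              \<le> real (card A) * 1 + \<bar>real (card A) * \<delta>\<bar>"
        using e1.E_bounds_all[OF A]
      proof eventually_elim
        case (elim x)
        have "\<bar>\<Sum>a\<in>A. - (e1.E a x * ln (e1.E a x))\<bar> \<le> real (card A) * 1"
          by (rule sum_abs_bound) (use elim in \<open>auto intro!: pw0a\<close>)
        then show ?case by linarith
      qed
    qed measurable
    show "AE x in mu1. (\<Sum>a\<in>A. g a x * e1.E a x + s a x)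
            \<le> (\<Sum>a\<in>A. - (e1.E a x * ln (e1.E a x))) + real (card A) * \<delta>"
      using e1.E_bounds_all[OF A]
    proof eventually_elim
      case (elim x)
      have "(\<Sum>a\<in>A. g a x * e1.E a x + s a x) \<le> (\<Sum>a\<in>A. - (e1.E a x * ln (e1.E a x)) + \<delta>)"
      proof (rule sum_mono)
        fix a assume "a \<in> A"
        then show "g a x * e1.E a x + s a x \<le> - (e1.E a x * ln (e1.E a x)) + \<delta>"
          unfolding g_def s_def \<delta>_def using elim pw2[of "e1.E a x" \<epsilon>] ep by auto
      qed
      moreover have "(\<Sum>a\<in>A. - (e1.E a x * ln (e1.E a x)) + \<delta>)
          = (\<Sum>a\<in>A. - (e1.E a x * ln (e1.E a x))) + real (card A) * \<delta>"
        by (simp only: sum.distrib sum_constant)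
      ultimately show ?case by linarith
    qed
  qed
  also have "\<dots> = cond_entropy mu1 A B + real (card A) * measure mu1 (space mu1) * \<delta>"
  proof -
    have i: "integrable mu1 (\<lambda>x. \<Sum>a\<in>A. - (e1.E a x * ln (e1.E a x)))"
    proof (rule e1.integrable_mu[where K="real (card A) * 1"])
      show "AE x in mu1. \<bar>\<Sum>a\<in>A. - (e1.E a x * ln (e1.E a x))\<bar> \<le> real (card A) * 1"
        using e1.E_bounds_all[OF A] by eventually_elim (rule sum_abs_bound, auto intro!: pw0a)
    qed measurable
    have c: "integrable mu1 (\<lambda>x. real (card A) * \<delta>)"
      by (rule finite_measure.integrable_const[OF e1.fm])
    show ?thesis using Bochner_Integration.integral_add[OF i c] e1.ent_eq[OF A(1)] by simp
  qed
  finally show ?thesis unfolding \<delta>_def .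
qed



theorem lemma3p2:
  fixes mu1 mu2 :: "'a::topological_space measure"
    and A B :: "'a set set"
  assumes "sets mu1 = sets borel" and "sets mu2 = sets borel"
    and "finite_measure mu1" and "finite_measure mu2"
    and "\<exists>m. sets m = sets borel \<and>
           (\<forall>S\<in>sets borel. emeasure mu1 S = emeasure mu2 S + emeasure m S)"
    and "meas_partition A" and "finite A"
    and "meas_partition B"
  shows "cond_entropy mu1 A B \<ge> cond_entropy mu2 A B"
proof -
  obtain m where m: "sets m = sets borel"
      "\<forall>S\<in>sets borel. emeasure mu1 S = emeasure mu2 S + emeasure m S"
    using assms(5) by blast
  have le: "emeasure mu2 X \<le> emeasure mu1 X" if "X \<in> sets borel" for X
    using m(2) that by simp
  define c1 where "c1 = measure mu1 (space mu1)"
  define c2 where "c2 = measure mu2 (space mu2)"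
  have sp1: "space mu1 = UNIV" using sets_eq_imp_space_eq[OF assms(1)] by simp
  have sp2: "space mu2 = UNIV" using sets_eq_imp_space_eq[OF assms(2)] by simp
  have "ennreal c2 \<le> ennreal c1"
    using le[of UNIV] finite_measure.emeasure_eq_measure[OF assms(3), of UNIV]
      finite_measure.emeasure_eq_measure[OF assms(4), of UNIV]
    by (simp add: c1_def c2_def sp1 sp2)
  then have c21: "c2 \<le> c1" by (simp add: c1_def ennreal_le_iff)
  have c2n: "0 \<le> c2" by (simp add: c2_def)
  show ?thesis
  proof (cases "c2 = 0")
    case True
    then have "cond_entropy mu2 A B = 0" by (simp add: cond_entropy_def c2_def)
    moreover have "0 \<le> cond_entropy mu1 A B"
    proof (cases "c1 = 0")
      case True
      then show ?thesis by (simp add: cond_entropy_def c1_def)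
    next
      case False
      then have "c1 > 0" using c21 c2n by simp
      then interpret e1: ent mu1 B using assms(1,3) by (intro ent.intro) (simp_all add: c1_def)
      show ?thesis by (rule e1.H_nonneg[OF assms(6,7)])
    qed
    ultimately show ?thesis by simp
  next
    case False
    then have c2p: "c2 > 0" using c2n by simp
    then have c1p: "c1 > 0" using c21 by simp
    have e1: "ent mu1" using assms(1,3) c1p by (intro ent.intro) (simp_all add: c1_def)
    have e2: "ent mu2" using assms(2,4) c2p by (intro ent.intro) (simp_all add: c2_def)
    define H1 where "H1 = cond_entropy mu1 A B"
    define H2 where "H2 = cond_entropy mu2 A B"
    define C where "C = real (card A) * c1"
    have bnd: "H2 \<le> H1 + C * (\<epsilon> - \<epsilon> * ln \<epsilon>)" if "0 < \<epsilon>" "\<epsilon> \<le> 1" for \<epsilon> :: real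
      using main_ineq[OF e1 e2 le assms(6,7) that] by (simp add: H1_def H2_def C_def c1_def)
    have lim: "((\<lambda>\<epsilon>::real. \<epsilon> - \<epsilon> * ln \<epsilon>) \<longlongrightarrow> 0) (at_right 0)" by real_asymp
    have lim2: "((\<lambda>\<epsilon>::real. H1 + C * (\<epsilon> - \<epsilon> * ln \<epsilon>)) \<longlongrightarrow> H1 + C * 0) (at_right 0)"
      by (intro tendsto_intros lim)
    have ev: "eventually (\<lambda>\<epsilon>::real. H2 \<le> H1 + C * (\<epsilon> - \<epsilon> * ln \<epsilon>)) (at_right 0)"
    proof -
      have "eventually (\<lambda>\<epsilon>::real. \<epsilon> \<in> {0<..<1}) (at_right 0)"
        by (rule eventually_at_right_real) simp
      then show ?thesis by eventually_elim (auto intro: bnd)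
    qed
    have "H2 \<le> H1 + C * 0"
      by (rule tendsto_le[OF trivial_limit_at_right_real lim2 tendsto_const ev])
    then show ?thesis by (simp add: H1_def H2_def)
  qed
qed

end
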